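(* The space $C([a,b],\mathbb{R}_\mathcal{I})$ of continuous interval-valued functions on $[a,b]$, with pointwise operations and the norm $\|\bar f\|_\infty=\max_{x\in[a,b]}\|\bar f(x)\|$, is a Banach space.
   Context: An interval number is a closed interval $\bar a=[a_l,a_r]$ with $a_l<a_r$ real; $\mathbb{R}_\mathcal{I}$ is the set of interval numbers. Write $a_c=(a_l+a_r)/2$, $a_w=(a_r-a_l)/2>0$, $\bar a=\langle a_c;a_w\rangle=[a_c-a_w,a_c+a_w]$. Operations: $\bar a+\bar b=\langle a_c+b_c;a_wb_w\rangle$, $k\bar a=\langle ka_c;a_w^k\rangle$, $\bar a-\bar b=\langle a_c-b_c;a_w/b_w\rangle$; norm $\|\bar a\|=\sqrt{a_c^2+\ln^2a_w}$; distance $d(\bar a,\bar b)=\|\bar a-\bar b\|$. Continuity of $\bar f:[a,b]\to\mathbb{R}_\mathcal{I}$ is with respect to $d$. Pointwise operations: $(\bar f+\bar g)(x)=\bar f(x)+\bar g(x)$, $(k\bar f)(x)=k\bar f(x)$. *)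

theory Defs
  imports "HOL-Analysis.Analysis"
begin

text \<open>An interval number [l,r] with l < r is represented as the pair (l, r).\<close>
type_synonym interval = "real \<times> real"

definition ivl_nums :: "interval set" where
  "ivl_nums = {(l, r). l < r}"

definition ic :: "interval \<Rightarrow> real" where
  "ic a = (fst a + snd a) / 2"

definition iw :: "interval \<Rightarrow> real" where
  "iw a = (snd a - fst a) / 2"

definition mk_ivl :: "real \<Rightarrow> real \<Rightarrow> interval" where
  "mk_ivl c w = (c - w, c + w)"

definition iadd :: "interval \<Rightarrow> interval \<Rightarrow> interval" where
  "iadd a b = mk_ivl (ic a + ic b) (iw a * iw b)"

definition iscale :: "real \<Rightarrow> interval \<Rightarrow> interval" where
  "iscale k a = mk_ivl (k * ic a) (iw a powr k)"

definition isub :: "interval \<Rightarrow> interval \<Rightarrow> interval" where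
  "isub a b = mk_ivl (ic a - ic b) (iw a / iw b)"

definition inorm :: "interval \<Rightarrow> real" where
  "inorm a = sqrt ((ic a)\<^sup>2 + (ln (iw a))\<^sup>2)"

definition idist :: "interval \<Rightarrow> interval \<Rightarrow> real" where
  "idist a b = inorm (isub a b)"

text \<open>The interval number <0;1> = [-1,1], the zero of the vector space.\<close>
definition izero :: interval where
  "izero = mk_ivl 0 1"

definition icontinuous_on :: "real set \<Rightarrow> (real \<Rightarrow> interval) \<Rightarrow> bool" where
  "icontinuous_on S f \<longleftrightarrow>
     (\<forall>x\<in>S. \<forall>e>0. \<exists>\<delta>>0. \<forall>y\<in>S. \<bar>y - x\<bar> < \<delta> \<longrightarrow> idist (f y) (f x) < e)"

text \<open>C([a,b], R_I): functions [a,b] -> R_I, represented extensionally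
  (fixed to the value izero outside [a,b]) so that function equality is equality
  of elements of the space.\<close>
definition Cfun :: "real \<Rightarrow> real \<Rightarrow> (real \<Rightarrow> interval) set" where
  "Cfun a b = {f. (\<forall>x\<in>{a..b}. f x \<in> ivl_nums) \<and> (\<forall>x. x \<notin> {a..b} \<longrightarrow> f x = izero)
                  \<and> icontinuous_on {a..b} f}"

definition fadd :: "(real \<Rightarrow> interval) \<Rightarrow> (real \<Rightarrow> interval) \<Rightarrow> (real \<Rightarrow> interval)" where
  "fadd f g = (\<lambda>x. iadd (f x) (g x))"

definition fscale :: "real \<Rightarrow> (real \<Rightarrow> interval) \<Rightarrow> (real \<Rightarrow> interval)" where
  "fscale k f = (\<lambda>x. iscale k (f x))"

definition fzero :: "real \<Rightarrow> interval" where
  "fzero = (\<lambda>x. izero)"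

text \<open>Sup norm; for continuous f on [a,b] (a < b) this supremum is the maximum.\<close>
definition supnorm :: "real \<Rightarrow> real \<Rightarrow> (real \<Rightarrow> interval) \<Rightarrow> real" where
  "supnorm a b f = (SUP x\<in>{a..b}. inorm (f x))"

end

theory Submission
  imports Defs
begin

definition phi :: "interval \<Rightarrow> complex" where
  "phi p = Complex (ic p) (ln (iw p))"

definition psi :: "complex \<Rightarrow> interval" where
  "psi z = mk_ivl (Re z) (exp (Im z))"

lemma ic_mk[simp]: "ic (mk_ivl c w) = c" by (simp add: ic_def mk_ivl_def)
lemma iw_mk[simp]: "iw (mk_ivl c w) = w" by (simp add: iw_def mk_ivl_def)

lemma mk_ic_iw[simp]: "mk_ivl (ic p) (iw p) = p"
  by (cases p) (simp add: ic_def iw_def mk_ivl_def field_simps)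

lemma ivl_iw: "p \<in> ivl_nums \<longleftrightarrow> iw p > 0"
  by (cases p) (auto simp: ivl_nums_def iw_def)

lemma psi_phi: "iw p > 0 \<Longrightarrow> psi (phi p) = p"
  by (simp add: psi_def phi_def)

lemma phi_psi[simp]: "phi (psi z) = z"
  by (simp add: psi_def phi_def complex_eq_iff)

lemma iw_psi[simp]: "iw (psi z) > 0"
  by (simp add: psi_def)

lemma phi_inj: "iw p > 0 \<Longrightarrow> iw q > 0 \<Longrightarrow> phi p = phi q \<Longrightarrow> p = q"
  by (metis psi_phi)

lemma izero_psi: "izero = psi 0"
  by (simp add: izero_def psi_def)

lemma iw_izero[simp]: "iw izero = 1" by (simp add: izero_def)
lemma phi_izero[simp]: "phi izero = 0" by (simp add: izero_def phi_def complex_eq_iff)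

lemma iw_iadd: "iw p > 0 \<Longrightarrow> iw q > 0 \<Longrightarrow> iw (iadd p q) > 0"
  by (simp add: iadd_def)

lemma iw_iscale: "iw p > 0 \<Longrightarrow> iw (iscale k p) > 0"
  by (simp add: iscale_def)

lemma phi_iadd: "iw p > 0 \<Longrightarrow> iw q > 0 \<Longrightarrow> phi (iadd p q) = phi p + phi q"
  by (simp add: iadd_def phi_def complex_eq_iff ln_mult)

lemma phi_iscale: "iw p > 0 \<Longrightarrow> phi (iscale k p) = of_real k * phi p"
  by (simp add: iscale_def phi_def complex_eq_iff ln_powr)

lemma inorm_phi: "inorm p = cmod (phi p)"
  by (simp add: inorm_def phi_def norm_complex_def)

lemma idist_phi: "iw p > 0 \<Longrightarrow> iw q > 0 \<Longrightarrow> idist p q = cmod (phi p - phi q)"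
  by (simp add: idist_def inorm_def isub_def phi_def norm_complex_def ln_div)

lemma Cfun_iff: "f \<in> Cfun a b \<longleftrightarrow> (\<forall>x. iw (f x) > 0) \<and> (\<forall>x. x \<notin> {a..b} \<longrightarrow> f x = izero)
   \<and> continuous_on {a..b} (\<lambda>x. phi (f x))"
proof
  assume f: "f \<in> Cfun a b"
  have pos: "\<forall>x. iw (f x) > 0"
    using f unfolding Cfun_def ivl_iw by (metis (mono_tags, lifting) iw_izero mem_Collect_eq zero_less_one)
  have "icontinuous_on {a..b} f" using f by (simp add: Cfun_def)
  hence "continuous_on {a..b} (\<lambda>x. phi (f x))"
    unfolding icontinuous_on_def continuous_on_iff dist_norm dist_real_def
    using pos by (simp add: idist_phi)
  thus "(\<forall>x. iw (f x) > 0) \<and> (\<forall>x. x \<notin> {a..b} \<longrightarrow> f x = izero)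
   \<and> continuous_on {a..b} (\<lambda>x. phi (f x))" using pos f by (simp add: Cfun_def)
next
  assume A: "(\<forall>x. iw (f x) > 0) \<and> (\<forall>x. x \<notin> {a..b} \<longrightarrow> f x = izero)
   \<and> continuous_on {a..b} (\<lambda>x. phi (f x))"
  hence "icontinuous_on {a..b} f"
    unfolding icontinuous_on_def continuous_on_iff dist_norm dist_real_def
    by (simp add: idist_phi)
  thus "f \<in> Cfun a b" using A by (simp add: Cfun_def ivl_iw)
qed

definition sn :: "real \<Rightarrow> real \<Rightarrow> (real \<Rightarrow> complex) \<Rightarrow> real" where
  "sn a b g = (SUP x\<in>{a..b}. cmod (g x))"

lemma supnorm_sn: "supnorm a b f = sn a b (\<lambda>x. phi (f x))"
  by (simp add: supnorm_def sn_def inorm_phi)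

lemma sn_bdd: "continuous_on {a..b::real} g \<Longrightarrow> bdd_above ((\<lambda>x. cmod (g x)) ` {a..b})"
proof -
  assume "continuous_on {a..b} g"
  hence "continuous_on {a..b} (\<lambda>x. cmod (g x))" by (intro continuous_intros)
  hence "compact ((\<lambda>x. cmod (g x)) ` {a..b})" by (rule compact_continuous_image[OF _ compact_Icc])
  thus ?thesis by (intro bounded_imp_bdd_above compact_imp_bounded)
qed

lemma sn_upper: "continuous_on {a..b} g \<Longrightarrow> x \<in> {a..b} \<Longrightarrow> cmod (g x) \<le> sn a b g"
  unfolding sn_def by (rule cSUP_upper) (auto intro: sn_bdd)

lemma sn_least: "a \<le> b \<Longrightarrow> (\<And>x. x \<in> {a..b} \<Longrightarrow> cmod (g x) \<le> c) \<Longrightarrow> sn a b g \<le> c"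
  unfolding sn_def by (rule cSUP_least) auto

lemma sn_nonneg: "a \<le> b \<Longrightarrow> continuous_on {a..b} g \<Longrightarrow> 0 \<le> sn a b g"
  using sn_upper[of a b g a] by (meson atLeastAtMost_iff norm_ge_zero order_refl order_trans)

lemma sn_zero: "a \<le> b \<Longrightarrow> continuous_on {a..b} g \<Longrightarrow> sn a b g = 0 \<longleftrightarrow> (\<forall>x\<in>{a..b}. g x = 0)"
proof
  assume "a \<le> b" "continuous_on {a..b} g" "sn a b g = 0"
  thus "\<forall>x\<in>{a..b}. g x = 0" using sn_upper[of a b g] by (metis norm_le_zero_iff)
next
  assume "a \<le> b" "\<forall>x\<in>{a..b}. g x = 0" "continuous_on {a..b} g"
  thus "sn a b g = 0" using sn_least[of a b g 0] sn_nonneg[of a b g] by auto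
qed

lemma sn_scale: "a \<le> b \<Longrightarrow> continuous_on {a..b} g \<Longrightarrow> sn a b (\<lambda>x. of_real k * g x) = \<bar>k\<bar> * sn a b g"
proof (rule antisym)
  assume ab: "a \<le> b" and g: "continuous_on {a..b} g"
  show "sn a b (\<lambda>x. of_real k * g x) \<le> \<bar>k\<bar> * sn a b g"
    by (rule sn_least[OF ab]) (simp add: norm_mult g mult_left_mono sn_upper)
  have g2: "continuous_on {a..b} (\<lambda>x. of_real k * g x)" using g by (intro continuous_intros)
  show "\<bar>k\<bar> * sn a b g \<le> sn a b (\<lambda>x. of_real k * g x)"
  proof (cases "k = 0")
    case True thus ?thesis using sn_nonneg[OF ab g2] by simp
  next
    case False
    have "sn a b g \<le> sn a b (\<lambda>x. of_real k * g x) / \<bar>k\<bar>"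
      by (rule sn_least[OF ab]) (use False sn_upper[OF g2] in \<open>auto simp: norm_mult field_simps\<close>)
    thus ?thesis using False by (simp add: field_simps)
  qed
qed

lemma sn_add: "a \<le> b \<Longrightarrow> continuous_on {a..b} g \<Longrightarrow> continuous_on {a..b} h \<Longrightarrow>
   sn a b (\<lambda>x. g x + h x) \<le> sn a b g + sn a b h"
proof (rule sn_least)
  fix x assume "a \<le> b" "continuous_on {a..b} g" "continuous_on {a..b} h" "x \<in> {a..b}"
  thus "cmod (g x + h x) \<le> sn a b g + sn a b h"
    using sn_upper[of a b g x] sn_upper[of a b h x] norm_triangle_ineq[of "g x" "h x"] by linarith
qed


lemma iadd_assoc: "iadd (iadd p q) r = iadd p (iadd q r)"
  by (simp add: iadd_def add.assoc mult.assoc)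
lemma iadd_comm: "iadd p q = iadd q p"
  by (simp add: iadd_def add.commute mult.commute)
lemma iadd_zero: "iadd p izero = p"
  by (simp add: iadd_def izero_def)
lemma iscale_iadd: "iw p > 0 \<Longrightarrow> iw q > 0 \<Longrightarrow> iscale k (iadd p q) = iadd (iscale k p) (iscale k q)"
  by (rule phi_inj) (auto simp: iw_iadd iw_iscale phi_iadd phi_iscale algebra_simps)
lemma iscale_add: "iw p > 0 \<Longrightarrow> iscale (k + l) p = iadd (iscale k p) (iscale l p)"
  by (rule phi_inj) (auto simp: iw_iadd iw_iscale phi_iadd phi_iscale algebra_simps)
lemma iscale_iscale: "iw p > 0 \<Longrightarrow> iscale k (iscale l p) = iscale (k * l) p"
  by (rule phi_inj) (auto simp: iw_iadd iw_iscale phi_iadd phi_iscale algebra_simps)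
lemma iscale_one: "iw p > 0 \<Longrightarrow> iscale 1 p = p"
  by (rule phi_inj) (auto simp: iw_iadd iw_iscale phi_iadd phi_iscale algebra_simps)
lemma iadd_neg: "iw p > 0 \<Longrightarrow> iadd p (iscale (-1) p) = izero"
  by (rule phi_inj) (auto simp: iw_iadd iw_iscale phi_iadd phi_iscale algebra_simps)
lemma iscale_zero: "iscale k izero = izero"
  by (rule phi_inj) (auto simp: iw_iadd iw_iscale phi_iadd phi_iscale algebra_simps)

lemma Cfun_pos: "f \<in> Cfun a b \<Longrightarrow> iw (f x) > 0"
  by (simp add: Cfun_iff)
lemma Cfun_out: "f \<in> Cfun a b \<Longrightarrow> x \<notin> {a..b} \<Longrightarrow> f x = izero"
  by (simp add: Cfun_iff)
lemma Cfun_cont: "f \<in> Cfun a b \<Longrightarrow> continuous_on {a..b} (\<lambda>x. phi (f x))"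
  by (simp add: Cfun_iff)

lemma CfunI: "(\<And>x. iw (f x) > 0) \<Longrightarrow> (\<And>x. x \<notin> {a..b} \<Longrightarrow> f x = izero)
   \<Longrightarrow> continuous_on {a..b} (\<lambda>x. phi (f x)) \<Longrightarrow> f \<in> Cfun a b"
  by (simp add: Cfun_iff)

lemma fadd_C: "f \<in> Cfun a b \<Longrightarrow> g \<in> Cfun a b \<Longrightarrow> fadd f g \<in> Cfun a b"
proof -
  assume f: "f \<in> Cfun a b" and g: "g \<in> Cfun a b"
  have "continuous_on {a..b} (\<lambda>x. phi (f x) + phi (g x))"
    using f g by (intro continuous_intros Cfun_cont)
  moreover have "\<And>x. phi (fadd f g x) = phi (f x) + phi (g x)"
    unfolding fadd_def using phi_iadd[OF Cfun_pos[OF f] Cfun_pos[OF g]] by simp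
  ultimately have c: "continuous_on {a..b} (\<lambda>x. phi (fadd f g x))" by simp
  show ?thesis
    using Cfun_pos[OF f] Cfun_pos[OF g] Cfun_out[OF f] Cfun_out[OF g]
    by (intro CfunI c) (auto simp: fadd_def iw_iadd iadd_zero)
qed

lemma fscale_C: "f \<in> Cfun a b \<Longrightarrow> fscale k f \<in> Cfun a b"
proof -
  assume f: "f \<in> Cfun a b"
  have "continuous_on {a..b} (\<lambda>x. of_real k * phi (f x))"
    using f by (intro continuous_intros Cfun_cont)
  moreover have "\<And>x. phi (fscale k f x) = of_real k * phi (f x)"
    unfolding fscale_def using phi_iscale[OF Cfun_pos[OF f]] by simp
  ultimately have c: "continuous_on {a..b} (\<lambda>x. phi (fscale k f x))" by simp
  show ?thesis
    using Cfun_pos[OF f] Cfun_out[OF f]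
    by (intro CfunI c) (auto simp: fscale_def iw_iscale iscale_zero)
qed

lemma fzero_C: "fzero \<in> Cfun a b"
  by (rule CfunI) (auto simp: fzero_def)

lemma N_fscale: "a \<le> b \<Longrightarrow> f \<in> Cfun a b \<Longrightarrow> supnorm a b (fscale k f) = \<bar>k\<bar> * supnorm a b f"
  by (simp add: supnorm_sn fscale_def phi_iscale Cfun_pos sn_scale Cfun_cont)

lemma N_fadd: "a \<le> b \<Longrightarrow> f \<in> Cfun a b \<Longrightarrow> g \<in> Cfun a b \<Longrightarrow>
   supnorm a b (fadd f g) \<le> supnorm a b f + supnorm a b g"
  by (simp add: supnorm_sn fadd_def phi_iadd Cfun_pos sn_add Cfun_cont)

lemma N_nonneg: "a \<le> b \<Longrightarrow> f \<in> Cfun a b \<Longrightarrow> 0 \<le> supnorm a b f"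
  by (simp add: supnorm_sn sn_nonneg Cfun_cont)

lemma N_zero: "a \<le> b \<Longrightarrow> f \<in> Cfun a b \<Longrightarrow> supnorm a b f = 0 \<longleftrightarrow> f = fzero"
proof -
  assume ab: "a \<le> b" and f: "f \<in> Cfun a b"
  have e1: "supnorm a b f = 0 \<longleftrightarrow> (\<forall>x\<in>{a..b}. phi (f x) = 0)"
    unfolding supnorm_sn by (rule sn_zero[OF ab Cfun_cont[OF f]])
  have e2: "(\<forall>x\<in>{a..b}. phi (f x) = 0) \<longleftrightarrow> f = fzero"
  proof
    assume A: "\<forall>x\<in>{a..b}. phi (f x) = 0"
    show "f = fzero"
    proof
      fix x show "f x = fzero x"
      proof (cases "x \<in> {a..b}")
        case True
        hence "phi (f x) = phi izero" using A by simp
        hence "f x = izero" using phi_inj[OF Cfun_pos[OF f, of x], of izero] by simp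
        thus ?thesis unfolding fzero_def by simp
      next
        case False thus ?thesis using f by (simp add: Cfun_out fzero_def)
      qed
    qed
  next
    assume "f = fzero"
    thus "\<forall>x\<in>{a..b}. phi (f x) = 0" unfolding fzero_def by simp
  qed
  show ?thesis using e1 e2 by blast
qed


lemma N_diff: "f \<in> Cfun a b \<Longrightarrow> g \<in> Cfun a b \<Longrightarrow>
  supnorm a b (fadd f (fscale (-1) g)) = sn a b (\<lambda>x. phi (f x) - phi (g x))"
  by (simp add: supnorm_sn fadd_def fscale_def phi_iadd iw_iscale phi_iscale Cfun_pos)

lemma cont_diff: "f \<in> Cfun a b \<Longrightarrow> g \<in> Cfun a b \<Longrightarrow>
  continuous_on {a..b} (\<lambda>x. phi (f x) - phi (g x))"
  by (intro continuous_intros Cfun_cont)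

lemma completeness:
  assumes ab: "a \<le> b" and F: "\<forall>n. F n \<in> Cfun a b"
    and cau: "\<forall>e>0. \<exists>M. \<forall>m\<ge>M. \<forall>n\<ge>M. supnorm a b (fadd (F m) (fscale (-1) (F n))) < e"
  shows "\<exists>f\<in>Cfun a b. (\<lambda>n. supnorm a b (fadd (F n) (fscale (-1) f))) \<longlonglongrightarrow> 0"
proof -
  define G where "G n x = phi (F n x)" for n x
  have uc: "uniformly_Cauchy_on {a..b} G"
    unfolding uniformly_Cauchy_on_def
  proof (intro allI impI)
    fix e :: real assume "e > 0"
    then obtain M where M: "\<forall>m\<ge>M. \<forall>n\<ge>M. supnorm a b (fadd (F m) (fscale (-1) (F n))) < e"
      using cau by blast
    show "\<exists>M. \<forall>x\<in>{a..b}. \<forall>m\<ge>M. \<forall>n\<ge>M. dist (G m x) (G n x) < e"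
    proof (intro exI ballI allI impI)
      fix x m n assume x: "x \<in> {a..b}" and mn: "M \<le> m" "M \<le> n"
      have "dist (G m x) (G n x) = cmod (phi (F m x) - phi (F n x))"
        by (simp add: G_def dist_norm)
      also have "\<dots> \<le> sn a b (\<lambda>x. phi (F m x) - phi (F n x))"
        by (rule sn_upper[OF cont_diff[OF F[rule_format] F[rule_format]] x])
      also have "\<dots> < e" using M mn N_diff[OF F[rule_format] F[rule_format]] by metis
      finally show "dist (G m x) (G n x) < e" .
    qed
  qed
  then obtain l where ul: "uniform_limit {a..b} G l sequentially"
    using Cauchy_uniformly_convergent uniformly_convergent_on_def by blast
  have contl: "continuous_on {a..b} l"
  proof (rule uniform_limit_theorem[OF _ ul])
    show "\<forall>\<^sub>F n in sequentially. continuous_on {a..b} (G n)"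
      using F by (simp add: G_def[abs_def] Cfun_cont)
  qed simp
  define f where "f x = (if x \<in> {a..b} then psi (l x) else izero)" for x
  have fl: "\<And>x. x \<in> {a..b} \<Longrightarrow> phi (f x) = l x" by (simp add: f_def)
  have fC: "f \<in> Cfun a b"
  proof (rule CfunI)
    show "\<And>x. 0 < iw (f x)" by (simp add: f_def)
    show "\<And>x. x \<notin> {a..b} \<Longrightarrow> f x = izero" unfolding f_def by auto
    show "continuous_on {a..b} (\<lambda>x. phi (f x))"
      using contl by (rule continuous_on_eq) (simp add: fl)
  qed
  have "(\<lambda>n. supnorm a b (fadd (F n) (fscale (-1) f))) \<longlonglongrightarrow> 0"
  proof (rule LIMSEQ_I)
    fix r :: real assume r: "0 < r"
    then have "\<forall>\<^sub>F n in sequentially. \<forall>x\<in>{a..b}. dist (G n x) (l x) < r / 2"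
      using ul r unfolding uniform_limit_iff by (meson half_gt_zero)
    then obtain N where N: "\<And>n x. n \<ge> N \<Longrightarrow> x \<in> {a..b} \<Longrightarrow> dist (G n x) (l x) < r / 2"
      unfolding eventually_sequentially by blast
    show "\<exists>no. \<forall>n\<ge>no. norm (supnorm a b (fadd (F n) (fscale (-1) f)) - 0) < r"
    proof (intro exI allI impI)
      fix n assume n: "N \<le> n"
      have le: "sn a b (\<lambda>x. phi (F n x) - phi (f x)) \<le> r / 2"
      proof (rule sn_least[OF ab])
        fix x assume x: "x \<in> {a..b}"
        show "cmod (phi (F n x) - phi (f x)) \<le> r / 2"
          using N[OF n x] fl[OF x] by (simp add: G_def dist_norm)
      qed
      have ge: "0 \<le> sn a b (\<lambda>x. phi (F n x) - phi (f x))"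
        by (rule sn_nonneg[OF ab cont_diff[OF F[rule_format] fC]])
      show "norm (supnorm a b (fadd (F n) (fscale (-1) f)) - 0) < r"
        using le ge r N_diff[OF F[rule_format] fC, of n] by simp
    qed
  qed
  thus ?thesis using fC by blast
qed

theorem theorem3p9:
  fixes a b :: real
  assumes "a < b"
  defines "C \<equiv> Cfun a b" and "N \<equiv> supnorm a b"
  shows
    \<comment> \<open>closure under the pointwise operations\<close>
    "(\<forall>f\<in>C. \<forall>g\<in>C. fadd f g \<in> C) \<and> (\<forall>k. \<forall>f\<in>C. fscale k f \<in> C) \<and> fzero \<in> C
    \<comment> \<open>real vector space axioms\<close>
     \<and> (\<forall>f\<in>C. \<forall>g\<in>C. \<forall>h\<in>C. fadd (fadd f g) h = fadd f (fadd g h))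
     \<and> (\<forall>f\<in>C. \<forall>g\<in>C. fadd f g = fadd g f)
     \<and> (\<forall>f\<in>C. fadd f fzero = f)
     \<and> (\<forall>f\<in>C. \<exists>g\<in>C. fadd f g = fzero)
     \<and> (\<forall>k. \<forall>f\<in>C. \<forall>g\<in>C. fscale k (fadd f g) = fadd (fscale k f) (fscale k g))
     \<and> (\<forall>k l. \<forall>f\<in>C. fscale (k + l) f = fadd (fscale k f) (fscale l f))
     \<and> (\<forall>k l. \<forall>f\<in>C. fscale k (fscale l f) = fscale (k * l) f)
     \<and> (\<forall>f\<in>C. fscale 1 f = f)
    \<comment> \<open>the sup norm is a norm\<close>
     \<and> (\<forall>f\<in>C. 0 \<le> N f)
     \<and> (\<forall>f\<in>C. N f = 0 \<longleftrightarrow> f = fzero)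
     \<and> (\<forall>k. \<forall>f\<in>C. N (fscale k f) = \<bar>k\<bar> * N f)
     \<and> (\<forall>f\<in>C. \<forall>g\<in>C. N (fadd f g) \<le> N f + N g)
    \<comment> \<open>completeness w.r.t. the norm-induced metric\<close>
     \<and> (\<forall>F. (\<forall>n. F n \<in> C) \<longrightarrow>
           (\<forall>e>0. \<exists>M. \<forall>m\<ge>M. \<forall>n\<ge>M. N (fadd (F m) (fscale (-1) (F n))) < e) \<longrightarrow>
           (\<exists>f\<in>C. (\<lambda>n. N (fadd (F n) (fscale (-1) f))) \<longlonglongrightarrow> 0))"
proof -
  have ab: "a \<le> b" using assms(1) by simp
  show ?thesis
    unfolding C_def N_def
    using fadd_C fscale_C fzero_C
      iadd_assoc iadd_comm iadd_zero
      N_nonneg[OF ab] N_zero[OF ab] N_fscale[OF ab] N_fadd[OF ab]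
      completeness[OF ab]
  proof (intro conjI ballI allI impI)
    fix f assume f: "f \<in> Cfun a b"
    show "\<exists>g\<in>Cfun a b. fadd f g = fzero"
      using f by (intro bexI[of _ "fscale (-1) f"] fscale_C)
        (auto simp: fadd_def fscale_def fzero_def iadd_neg Cfun_pos)
  next
    fix f g h assume "f \<in> Cfun a b" "g \<in> Cfun a b" "h \<in> Cfun a b"
    show "fadd (fadd f g) h = fadd f (fadd g h)" by (simp add: fadd_def iadd_assoc)
  next
    fix f g assume "f \<in> Cfun a b" "g \<in> Cfun a b"
    show "fadd f g = fadd g f" by (simp add: fadd_def iadd_comm)
  next
    fix f assume "f \<in> Cfun a b"
    show "fadd f fzero = f" by (simp add: fadd_def fzero_def iadd_zero)
  next
    fix k f g assume "f \<in> Cfun a b" "g \<in> Cfun a b"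
    thus "fscale k (fadd f g) = fadd (fscale k f) (fscale k g)"
      by (simp add: fadd_def fscale_def iscale_iadd Cfun_pos)
  next
    fix k l f assume "f \<in> Cfun a b"
    thus "fscale (k + l) f = fadd (fscale k f) (fscale l f)"
      by (simp add: fadd_def fscale_def iscale_add Cfun_pos)
  next
    fix k l f assume "f \<in> Cfun a b"
    thus "fscale k (fscale l f) = fscale (k * l) f"
      by (simp add: fscale_def iscale_iscale Cfun_pos)
  next
    fix f assume "f \<in> Cfun a b"
    thus "fscale 1 f = f"
      by (simp add: fscale_def iscale_one Cfun_pos)
  qed auto
qed

end
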